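(* Assume (A.3). Then there is a constant $C_{T,\lambda,\epsilon}>0$, independent of $h$, such that for all sufficiently small $h$, \[ \int_0^T\big\|f(\dot{\hat y}_h(t),\hat y_h(t),\hat u_h(t),t)\big\|_2^2\,dt\le C_{T,\lambda,\epsilon}h^{2\lambda\eta}. \]
   Context: Let $T>0$. $\mathcal{X}$: pairs $(y,u)$ with $y:[0,T]\to\mathbb{R}^{n_y}$, $y\in L^\infty$, $\dot y\in L^2$ (weak derivative), $u\in L^\infty([0,T];\mathbb{R}^{n_u})$; $\|(y,u)\|_{\mathcal{X}}=\|\dot y\|_{L^2}+\operatorname{ess\,sup}_t\|(y(t),u(t))\|_\infty$, where $\|\dot y\|_{L^2}=(\int_0^T\|\dot y\|_2^2dt)^{1/2}$. Given $M,b$ on $\mathbb{R}^{n_y}\times\mathbb{R}^{n_y}$, $f_1:\mathbb{R}^{n_y}\times\mathbb{R}^{n_u}\times[0,T]\to\mathbb{R}^{n_y}$, $f_2:\mathbb{R}^{n_y}\times\mathbb{R}^{n_u}\times[0,T]\to\mathbb{R}^{n_c}$ and bounds $y_L\le y_R$, $u_L\le u_R$, the optimal control problem minimizes $M(y(0),y(T))$ over $\mathcal{X}$ subject to $b(y(0),y(T))=0$, $\dot y=f_1(y,u,t)$ and $f_2(y,u,t)=0$ a.e., and the bounds for all $t$; $(y^\star,u^\star)$ is a local minimizer. $f(\dot y,y,u,t)=(f_1(y,u,t)-\dot y,\ f_2(y,u,t))$. Mesh $0=t_1<\dots<t_{N+1}=T$, $h=\max_i(t_{i+1}-t_i)$,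 degree $p$; $\mathcal{X}_{h,p}$: $y_h$ continuous and polynomial of degree $\le p$ on each mesh interval, $u_h$ polynomial of degree $\le p-1$ on each mesh interval; $\mathcal{B}_{h,p}\subset\mathcal{X}_{h,p}$ the pairs satisfying the bounds at the sampling points. (Approximability) there are $h_0,\eta,C_\eta>0$ such that for all $h\le h_0$ there is $(y_h,u_h)\in\mathcal{B}_{h,p}$ with $\|(y^\star,u^\star)-(y_h,u_h)\|_{\mathcal{X}}\le C_\eta h^\eta$; $(\hat y_h,\hat u_h)$ denotes a fixed such pair. (A.3): there are $\lambda\in(0,1]$, $C_\lambda>0$, $\epsilon>0$ such that $M$ and $b$ are $\lambda$-H\"older with constant $C_\lambda$ at $(y^\star(0),y^\star(T))$ within Euclidean distance $\epsilon$, and for each $t$, $\|(f_1(y^\star(t),u^\star(t),t)-f_1(v,w,t),f_2(y^\star(t),u^\star(t),t)-f_2(v,w,t))\|_2\le C_\lambda\|(y^\star(t)-v,u^\star(t)-w)\|_2^\lambda$ whenever $\|(y^\star(t)-v,u^\star(t)-w)\|_2\le\epsilon$. *)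

theory Defs
  imports "HOL-Analysis.Analysis" "HOL-Computational_Algebra.Polynomial"
begin

text \<open>Weak derivative on [0,T], using the continuous (absolutely continuous) representative.\<close>
definition weak_deriv_on :: "real \<Rightarrow> (real \<Rightarrow> real^'n) \<Rightarrow> (real \<Rightarrow> real^'n) \<Rightarrow> bool" where
  "weak_deriv_on T y yd \<longleftrightarrow> yd integrable_on {0..T} \<and>
     (\<forall>t\<in>{0..T}. y t = y 0 + integral {0..t} yd)"

definition L2_on :: "real \<Rightarrow> (real \<Rightarrow> real^'n) \<Rightarrow> bool" where
  "L2_on T g \<longleftrightarrow> g measurable_on {0..T} \<and> (\<lambda>t. (norm (g t))\<^sup>2) integrable_on {0..T}"

definition L2_norm_on :: "real \<Rightarrow> (real \<Rightarrow> real^'n) \<Rightarrow> real" where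
  "L2_norm_on T g = sqrt (integral {0..T} (\<lambda>t. (norm (g t))\<^sup>2))"

definition ess_bounded_on :: "real \<Rightarrow> (real \<Rightarrow> 'a::real_normed_vector) \<Rightarrow> bool" where
  "ess_bounded_on T g \<longleftrightarrow> (\<exists>B. AE t in lebesgue. t \<in> {0..T} \<longrightarrow> norm (g t) \<le> B)"

definition ess_sup_on :: "real \<Rightarrow> (real \<Rightarrow> real) \<Rightarrow> real" where
  "ess_sup_on T g = Inf {c. AE t in lebesgue. t \<in> {0..T} \<longrightarrow> g t \<le> c}"

definition in_X :: "real \<Rightarrow> (real \<Rightarrow> real^'ny) \<Rightarrow> (real \<Rightarrow> real^'nu) \<Rightarrow> bool" where
  "in_X T y u \<longleftrightarrow> y measurable_on {0..T} \<and> ess_bounded_on T y \<and>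
     (\<exists>yd. weak_deriv_on T y yd \<and> L2_on T yd) \<and>
     u measurable_on {0..T} \<and> ess_bounded_on T u"

definition X_norm :: "real \<Rightarrow> (real \<Rightarrow> real^'ny) \<Rightarrow> (real \<Rightarrow> real^'ny) \<Rightarrow> (real \<Rightarrow> real^'nu) \<Rightarrow> real" where
  "X_norm T yd y u = L2_norm_on T yd + ess_sup_on T (\<lambda>t. infnorm (y t, u t))"

definition X_close :: "real \<Rightarrow> (real \<Rightarrow> real^'ny) \<Rightarrow> (real \<Rightarrow> real^'nu) \<Rightarrow>
    (real \<Rightarrow> real^'ny) \<Rightarrow> (real \<Rightarrow> real^'nu) \<Rightarrow> real \<Rightarrow> bool" where
  "X_close T y u y' u' d \<longleftrightarrow> (\<exists>yd yd'. weak_deriv_on T y yd \<and> weak_deriv_on T y' yd' \<and>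
      L2_on T yd \<and> L2_on T yd' \<and>
      X_norm T (\<lambda>t. yd t - yd' t) (\<lambda>t. y t - y' t) (\<lambda>t. u t - u' t) \<le> d)"

definition within_bounds :: "real^'ny \<Rightarrow> real^'ny \<Rightarrow> real^'nu \<Rightarrow> real^'nu \<Rightarrow> real^'ny \<Rightarrow> real^'nu \<Rightarrow> bool" where
  "within_bounds yL yR uL uR v w \<longleftrightarrow>
     (\<forall>i. yL $ i \<le> v $ i \<and> v $ i \<le> yR $ i) \<and> (\<forall>j. uL $ j \<le> w $ j \<and> w $ j \<le> uR $ j)"

definition feasible :: "real \<Rightarrow> (real^'ny \<Rightarrow> real^'ny \<Rightarrow> real^'nb) \<Rightarrow>
    (real^'ny \<Rightarrow> real^'nu \<Rightarrow> real \<Rightarrow> real^'ny) \<Rightarrow> (real^'ny \<Rightarrow> real^'nu \<Rightarrow> real \<Rightarrow> real^'nc) \<Rightarrow>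
    real^'ny \<Rightarrow> real^'ny \<Rightarrow> real^'nu \<Rightarrow> real^'nu \<Rightarrow>
    (real \<Rightarrow> real^'ny) \<Rightarrow> (real \<Rightarrow> real^'nu) \<Rightarrow> bool" where
  "feasible T b f1 f2 yL yR uL uR y u \<longleftrightarrow> in_X T y u \<and> b (y 0) (y T) = 0 \<and>
     (\<exists>yd. weak_deriv_on T y yd \<and> (AE t in lebesgue. t \<in> {0..T} \<longrightarrow> yd t = f1 (y t) (u t) t)) \<and>
     (AE t in lebesgue. t \<in> {0..T} \<longrightarrow> f2 (y t) (u t) t = 0) \<and>
     (\<forall>t\<in>{0..T}. within_bounds yL yR uL uR (y t) (u t))"

definition local_minimizer :: "real \<Rightarrow> (real^'ny \<Rightarrow> real^'ny \<Rightarrow> real) \<Rightarrow> (real^'ny \<Rightarrow> real^'ny \<Rightarrow> real^'nb) \<Rightarrow>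
    (real^'ny \<Rightarrow> real^'nu \<Rightarrow> real \<Rightarrow> real^'ny) \<Rightarrow> (real^'ny \<Rightarrow> real^'nu \<Rightarrow> real \<Rightarrow> real^'nc) \<Rightarrow>
    real^'ny \<Rightarrow> real^'ny \<Rightarrow> real^'nu \<Rightarrow> real^'nu \<Rightarrow>
    (real \<Rightarrow> real^'ny) \<Rightarrow> (real \<Rightarrow> real^'nu) \<Rightarrow> bool" where
  "local_minimizer T M b f1 f2 yL yR uL uR ys us \<longleftrightarrow>
     feasible T b f1 f2 yL yR uL uR ys us \<and>
     (\<exists>d>0. \<forall>y u. feasible T b f1 f2 yL yR uL uR y u \<and> X_close T y u ys us d \<longrightarrow>
        M (ys 0) (ys T) \<le> M (y 0) (y T))"

definition is_mesh :: "real \<Rightarrow> (nat \<Rightarrow> real) \<Rightarrow> nat \<Rightarrow> bool" where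
  "is_mesh T tm N \<longleftrightarrow> N \<ge> 1 \<and> tm 1 = 0 \<and> tm (N + 1) = T \<and> (\<forall>i\<in>{1..N}. tm i < tm (Suc i))"

definition mesh_width :: "(nat \<Rightarrow> real) \<Rightarrow> nat \<Rightarrow> real" where
  "mesh_width tm N = Max {tm (Suc i) - tm i | i. i \<in> {1..N}}"

definition in_Xhp :: "real \<Rightarrow> (nat \<Rightarrow> real) \<Rightarrow> nat \<Rightarrow> nat \<Rightarrow> (real \<Rightarrow> real^'ny) \<Rightarrow> (real \<Rightarrow> real^'nu) \<Rightarrow> bool" where
  "in_Xhp T tm N p y u \<longleftrightarrow> continuous_on {0..T} y \<and>
     (\<forall>i\<in>{1..N}.
        (\<forall>k. \<exists>q::real poly. degree q \<le> p \<and> (\<forall>t\<in>{tm i..tm (Suc i)}. y t $ k = poly q t)) \<and>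
        (\<forall>k. \<exists>q::real poly. degree q \<le> p - 1 \<and> (\<forall>t\<in>{tm i..<tm (Suc i)}. u t $ k = poly q t)))"

text \<open>B_{h,p}: elements of X_{h,p} satisfying the bounds at the sampling points
  (the sampling points of a mesh are given by the abstract parameter samp).\<close>
definition in_Bhp :: "real \<Rightarrow> ((nat \<Rightarrow> real) \<Rightarrow> nat \<Rightarrow> real set) \<Rightarrow> (nat \<Rightarrow> real) \<Rightarrow> nat \<Rightarrow> nat \<Rightarrow>
    real^'ny \<Rightarrow> real^'ny \<Rightarrow> real^'nu \<Rightarrow> real^'nu \<Rightarrow>
    (real \<Rightarrow> real^'ny) \<Rightarrow> (real \<Rightarrow> real^'nu) \<Rightarrow> bool" where
  "in_Bhp T samp tm N p yL yR uL uR y u \<longleftrightarrow> in_Xhp T tm N p y u \<and>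
     (\<forall>s\<in>samp tm N. within_bounds yL yR uL uR (y s) (u s))"

end

theory Submission imports Defs begin

lemma zero_sub_integrals:
  fixes f :: "real \<Rightarrow> real"
  assumes fi: "f integrable_on {0..T}" and z: "\<forall>t\<in>{0..T}. integral {0..t} f = 0"
    and uv: "0 \<le> u" "u \<le> v" "v \<le> T"
  shows "integral {u..v} f = 0"
proof -
  have "f integrable_on {0..v}" using fi uv by (intro integrable_subinterval_real[OF fi]) auto
  from Henstock_Kurzweil_Integration.integral_combine[OF uv(1,2) this]
  have "integral {0..u} f + integral {u..v} f = integral {0..v} f" .
  moreover have "integral {0..u} f = 0" "integral {0..v} f = 0" using z uv by auto
  ultimately show ?thesis by simp
qed

lemma abs_int_zero:
  fixes f :: "real \<Rightarrow> real"
  assumes fi: "f integrable_on {0..T}" and z: "\<forall>t\<in>{0..T}. integral {0..t} f = 0"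
  shows "f absolutely_integrable_on {0..T}"
proof -
  have "f absolutely_integrable_on cbox 0 T"
  proof (rule bounded_variation_absolutely_integrable_interval[where B=0])
    show "f integrable_on cbox 0 T" using fi by simp
    fix d assume d: "d division_of cbox 0 T"
    have "norm (integral K f) = 0" if "K \<in> d" for K
    proof -
      from division_ofD(2,3,4)[OF d that] obtain u v where K: "K = cbox u v" "K \<noteq> {}" "K \<subseteq> cbox 0 T"
        by metis
      then have "0 \<le> u" "u \<le> v" "v \<le> T" by auto
      then show ?thesis using zero_sub_integrals[OF fi z] K by simp
    qed
    then show "(\<Sum>K\<in>d. norm (integral K f)) \<le> 0" by simp
  qed
  then show ?thesis by simp
qed

lemma ae_zero_of_integrals:
  fixes f :: "real \<Rightarrow> real"
  assumes fi: "f integrable_on {0..T}" and z: "\<forall>t\<in>{0..T}. integral {0..t} f = 0"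
  shows "AE t in lebesgue. t \<in> {0..T} \<longrightarrow> f t = 0"
proof -
  have ai: "set_integrable lebesgue {0..T} f" using abs_int_zero[OF fi z] by simp
  define F where "F = (\<lambda>x. indicator {0..T} x * f x)"
  have Fi: "integrable lebesgue F" using ai by (simp add: set_integrable_def F_def)
  then have Fm: "F \<in> borel_measurable lebesgue" by auto
  from completion_ex_borel_measurable_real[OF this] obtain G where
    G: "G \<in> borel_measurable lborel" "AE x in lborel. F x = G x" by blast
  define G' where "G' = (\<lambda>x. indicator {0..T} x * G x)"
  have G'm: "G' \<in> borel_measurable lborel" unfolding G'_def using G(1) by measurable
  have FG': "AE x in lborel. F x = G' x" using G(2)
    by eventually_elim (auto simp: F_def G'_def indicator_def of_bool_def split: if_splits)
  have FG'L: "AE x in lebesgue. F x = G' x" using AE_completion[OF FG'] .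
  have G'mL: "G' \<in> borel_measurable lebesgue" using G'm by (rule measurable_completion)
  have "integrable lebesgue G'" using integrable_cong_AE_imp[OF Fi G'mL FG'L] .
  then have G'i: "integrable lborel G'" using integrable_completion[OF G'm] by simp
  have key: "(LINT x|lborel. indicator {a<..} x * G' x) = 0" for a
  proof -
    have m1: "(\<lambda>x. indicator {a<..} x * G' x) \<in> borel_measurable lborel" using G'm by measurable
    have "(LINT x|lborel. indicator {a<..} x * G' x) = (LINT x|lebesgue. indicator {a<..} x * G' x)"
      using integral_completion[OF m1] by simp
    also have "\<dots> = (LINT x|lebesgue. indicator {a<..} x * F x)"
    proof (intro integral_cong_AE)
      show "(\<lambda>x. indicat_real {a<..} x * G' x) \<in> borel_measurable lebesgue"
        using m1 by (rule measurable_completion)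
      show "(\<lambda>x. indicat_real {a<..} x * F x) \<in> borel_measurable lebesgue"
        by (intro borel_measurable_times borel_measurable_indicator Fm) auto
    qed (use FG'L in \<open>auto elim!: eventually_mono\<close>)
    also have "\<dots> = (LINT x:({0..T} \<inter> {a<..})|lebesgue. f x)"
      by (simp add: set_lebesgue_integral_def F_def indicator_inter_arith mult_ac)
    also have "\<dots> = integral ({0..T} \<inter> {a<..}) f"
      by (rule set_lebesgue_integral_eq_integral(2)[OF set_integrable_subset[OF ai]]) auto
    also have "\<dots> = 0"
    proof (cases "a < 0")
      case True
      then have e: "{0..T} \<inter> {a<..} = {0..T}" by auto
      show ?thesis
      proof (cases "0 \<le> T")
        case True then show ?thesis using e z by auto
      next
        case False then show ?thesis using e by simp
      qed
    next
      case False
      show ?thesis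
      proof (cases "a < T")
        case True
        with False have e: "{0..T} \<inter> {a<..} = {a<..T}" by auto
        have "integral {a<..T} f = integral {a..T} f"
          by (rule integral_spike_set; rule negligible_subset[of "{a}"]) auto
        also have "\<dots> = 0" using zero_sub_integrals[OF fi z, of a T] False True by simp
        finally show ?thesis using e by simp
      next
        case False2: False
        then have "{0..T} \<inter> {a<..} = {}" by auto
        then show ?thesis by simp
      qed
    qed
    finally show ?thesis .
  qed
  define P where "P = (\<lambda>x. max (G' x) 0)"
  define N where "N = (\<lambda>x. max (- G' x) 0)"
  have Pi: "integrable lborel (\<lambda>x. P x * indicator A x)" if "A \<in> sets borel" for A
  proof -
    have "integrable lborel (\<lambda>x. indicator A x *\<^sub>R max (G' x) 0)"
      using that by (intro integrable_mult_indicator integrable_max G'i integrable_zero integrable_minus) auto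
    then show ?thesis by (simp add: P_def mult.commute)
  qed
  have Ni: "integrable lborel (\<lambda>x. N x * indicator A x)" if "A \<in> sets borel" for A
  proof -
    have "integrable lborel (\<lambda>x. indicator A x *\<^sub>R max (- G' x) 0)"
      using that by (intro integrable_mult_indicator integrable_max G'i integrable_zero integrable_minus) auto
    then show ?thesis by (simp add: N_def mult.commute)
  qed
  have Pm: "P \<in> borel_measurable lborel" unfolding P_def using G'm by measurable
  have Nm: "N \<in> borel_measurable lborel" unfolding N_def using G'm by measurable
  have nnP: "(\<integral>\<^sup>+ x. ennreal (P x) * indicator A x \<partial>lborel) = ennreal (LINT x|lborel. P x * indicator A x)"
    if "A \<in> sets borel" for A
  proof -
    have "(\<integral>\<^sup>+ x. ennreal (P x) * indicator A x \<partial>lborel) = (\<integral>\<^sup>+ x. ennreal (P x * indicator A x) \<partial>lborel)"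
      by (intro nn_integral_cong) (auto simp: indicator_def)
    also have "\<dots> = ennreal (LINT x|lborel. P x * indicator A x)"
      by (rule nn_integral_eq_integral[OF Pi[OF that]]) (auto simp: P_def indicator_def)
    finally show ?thesis .
  qed
  have nnN: "(\<integral>\<^sup>+ x. ennreal (N x) * indicator A x \<partial>lborel) = ennreal (LINT x|lborel. N x * indicator A x)"
    if "A \<in> sets borel" for A
  proof -
    have "(\<integral>\<^sup>+ x. ennreal (N x) * indicator A x \<partial>lborel) = (\<integral>\<^sup>+ x. ennreal (N x * indicator A x) \<partial>lborel)"
      by (intro nn_integral_cong) (auto simp: indicator_def)
    also have "\<dots> = ennreal (LINT x|lborel. N x * indicator A x)"
      by (rule nn_integral_eq_integral[OF Ni[OF that]]) (auto simp: N_def indicator_def)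
    finally show ?thesis .
  qed
  have PN: "(LINT x|lborel. P x * indicator {a<..} x) = (LINT x|lborel. N x * indicator {a<..} x)" for a
  proof -
    have "(LINT x|lborel. P x * indicator {a<..} x) - (LINT x|lborel. N x * indicator {a<..} x)
        = (LINT x|lborel. P x * indicator {a<..} x - N x * indicator {a<..} x)"
      using Pi Ni by (intro Bochner_Integration.integral_diff[symmetric]) auto
    also have "\<dots> = (LINT x|lborel. indicator {a<..} x * G' x)"
      by (intro Bochner_Integration.integral_cong) (auto simp: P_def N_def indicator_def)
    finally show ?thesis using key by simp
  qed
  have dens: "density lborel (\<lambda>x. ennreal (P x)) = density lborel (\<lambda>x. ennreal (N x))"
  proof (rule measure_eqI_lessThan)
    show "sets (density lborel (\<lambda>x. ennreal (P x))) = sets borel" by simp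
    show "sets (density lborel (\<lambda>x. ennreal (N x))) = sets borel" by simp
    fix x
    show "emeasure (density lborel (\<lambda>x. ennreal (P x))) {x<..} < \<infinity>"
      using Pm by (simp add: emeasure_density nnP)
    show "emeasure (density lborel (\<lambda>x. ennreal (P x))) {x<..} = emeasure (density lborel (\<lambda>x. ennreal (N x))) {x<..}"
      using Pm Nm by (simp add: emeasure_density nnP nnN PN)
  qed
  have fin: "integral\<^sup>N lborel (\<lambda>x. ennreal (P x)) \<noteq> \<infinity>"
  proof -
    have "integral\<^sup>N lborel (\<lambda>x. ennreal (P x)) = (\<integral>\<^sup>+ x. ennreal (P x) * indicator {-1<..} x \<partial>lborel)"
      by (intro nn_integral_cong) (auto simp: P_def G'_def indicator_def)
    then show ?thesis using nnP[of "{-1<..}"] by simp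
  qed
  have "AE x in lborel. ennreal (P x) = ennreal (N x)"
    using finite_density_unique[of "\<lambda>x. ennreal (P x)" lborel "\<lambda>x. ennreal (N x)"] Pm Nm fin dens by simp
  then have "AE x in lborel. G' x = 0"
    by eventually_elim (auto simp: P_def N_def max_def split: if_splits)
  then have "AE x in lebesgue. G' x = 0" by (rule AE_completion)
  then show ?thesis using FG'L
    by eventually_elim (auto simp: F_def)
qed

lemma int_comp:
  fixes f :: "real \<Rightarrow> real^'n"
  assumes "f integrable_on S"
  shows "(\<lambda>x. f x $ k) integrable_on S"
  using integrable_linear[OF assms bounded_linear_vec_nth[of k]] by (simp add: o_def)

lemma weak_deriv_unique:
  fixes yd1 :: "real \<Rightarrow> real^'n"
  assumes d1: "weak_deriv_on T y yd1" and d2: "weak_deriv_on T y yd2"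
  shows "AE t in lebesgue. t \<in> {0..T} \<longrightarrow> yd1 t = yd2 t"
proof -
  have i1: "yd1 integrable_on {0..T}" and i2: "yd2 integrable_on {0..T}"
    using d1 d2 unfolding weak_deriv_on_def by blast+
  have "AE t in lebesgue. t \<in> {0..T} \<longrightarrow> yd1 t $ k - yd2 t $ k = 0" for k
  proof (rule ae_zero_of_integrals)
    show "(\<lambda>t. yd1 t $ k - yd2 t $ k) integrable_on {0..T}"
      by (rule integrable_diff[OF int_comp[OF i1] int_comp[OF i2]])
    show "\<forall>t\<in>{0..T}. integral {0..t} (\<lambda>t. yd1 t $ k - yd2 t $ k) = 0"
    proof
      fix t assume t: "t \<in> {0..T}"
      have j1: "yd1 integrable_on {0..t}" using integrable_subinterval_real[OF i1] t by simp
      have j2: "yd2 integrable_on {0..t}" using integrable_subinterval_real[OF i2] t by simp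
      have e1: "y t = y 0 + integral {0..t} yd1" using d1 t unfolding weak_deriv_on_def by blast
      have e2: "y t = y 0 + integral {0..t} yd2" using d2 t unfolding weak_deriv_on_def by blast
      have "integral {0..t} (\<lambda>t. yd1 t $ k - yd2 t $ k) = integral {0..t} (\<lambda>t. yd1 t $ k) - integral {0..t} (\<lambda>t. yd2 t $ k)"
        by (rule integral_diff[OF int_comp[OF j1] int_comp[OF j2]])
      also have "\<dots> = integral {0..t} yd1 $ k - integral {0..t} yd2 $ k"
        using integral_component_eq_cart[OF j1] integral_component_eq_cart[OF j2] by simp
      also have "\<dots> = 0" using e1 e2 by simp
      finally show "integral {0..t} (\<lambda>t. yd1 t $ k - yd2 t $ k) = 0" .
    qed
  qed
  then have "AE t in lebesgue. \<forall>k. t \<in> {0..T} \<longrightarrow> yd1 t $ k - yd2 t $ k = 0"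
    by (rule eventually_all_finite)
  then show ?thesis by eventually_elim (simp add: vec_eq_iff)
qed
lemma u_bounded:
  fixes u :: "real \<Rightarrow> real^'nu" and y :: "real \<Rightarrow> real^'ny"
  assumes m: "is_mesh T tm N" and x: "in_Xhp T tm N p y u"
  shows "\<exists>B. \<forall>t\<in>{0..<T}. norm (u t) \<le> B"
proof -
  have "\<forall>i\<in>{1..N}. \<exists>B. \<forall>t\<in>{tm i..<tm (Suc i)}. norm (u t) \<le> B"
  proof
    fix i assume i: "i \<in> {1..N}"
    have "\<forall>k. \<exists>B. \<forall>t\<in>{tm i..<tm (Suc i)}. \<bar>u t $ k\<bar> \<le> B"
    proof
      fix k
      obtain q :: "real poly" where q: "\<forall>t\<in>{tm i..<tm (Suc i)}. u t $ k = poly q t"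
        using x i unfolding in_Xhp_def by blast
      have "bounded ((\<lambda>t. poly q t) ` {tm i..tm (Suc i)})"
        by (intro compact_imp_bounded compact_continuous_image continuous_intros) auto
      then obtain B where B: "\<forall>z\<in>(\<lambda>t. poly q t) ` {tm i..tm (Suc i)}. norm z \<le> B"
        unfolding bounded_iff by blast
      show "\<exists>B. \<forall>t\<in>{tm i..<tm (Suc i)}. \<bar>u t $ k\<bar> \<le> B" using B q by (intro exI[of _ B]) auto
    qed
    from choice[OF this] obtain Bk where Bk: "\<And>k. \<forall>t\<in>{tm i..<tm (Suc i)}. \<bar>u t $ k\<bar> \<le> Bk k" by blast
    show "\<exists>B. \<forall>t\<in>{tm i..<tm (Suc i)}. norm (u t) \<le> B"
    proof (intro exI[of _ "sum Bk UNIV"] ballI)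
      fix t assume t: "t \<in> {tm i..<tm (Suc i)}"
      have "norm (u t) \<le> (\<Sum>k\<in>UNIV. \<bar>u t $ k\<bar>)" by (rule norm_le_l1_cart)
      also have "\<dots> \<le> sum Bk UNIV" using Bk t by (intro sum_mono) auto
      finally show "norm (u t) \<le> sum Bk UNIV" .
    qed
  qed
  from bchoice[OF this] obtain Bi where Bi: "\<And>i. i \<in> {1..N} \<Longrightarrow> \<forall>t\<in>{tm i..<tm (Suc i)}. norm (u t) \<le> Bi i" by blast
  show ?thesis
  proof (intro exI[of _ "\<Sum>i\<in>{1..N}. \<bar>Bi i\<bar>"] ballI)
    fix t assume t: "t \<in> {0..<T}"
    define I where "I = {i\<in>{1..N}. tm i \<le> t}"
    have N1: "N \<ge> 1" "tm 1 = 0" "tm (N + 1) = T" using m by (auto simp: is_mesh_def)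
    have fI: "finite I" by (simp add: I_def)
    have "1 \<in> I" using N1 t by (auto simp: I_def)
    then have neI: "I \<noteq> {}" by auto
    define i where "i = Max I"
    have iI: "i \<in> I" using Max_in[OF fI neI] by (simp add: i_def)
    then have i1: "i \<in> {1..N}" "tm i \<le> t" by (auto simp: I_def)
    have "t < tm (Suc i)"
    proof (cases "i < N")
      case True
      then have "Suc i \<in> {1..N}" using i1 by auto
      moreover have "Suc i \<notin> I"
      proof
        assume "Suc i \<in> I"
        from Max_ge[OF fI this] show False by (simp add: i_def[symmetric])
      qed
      ultimately show ?thesis by (auto simp: I_def)
    next
      case False
      then have "i = N" using i1 by auto
      then show ?thesis using N1 t by auto
    qed
    then have "norm (u t) \<le> Bi i" using Bi[OF i1(1)] i1 by auto
    also have "\<dots> \<le> \<bar>Bi i\<bar>" by simp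
    also have "\<dots> \<le> (\<Sum>i\<in>{1..N}. \<bar>Bi i\<bar>)"
      using i1 by (intro member_le_sum) auto
    finally show "norm (u t) \<le> (\<Sum>i\<in>{1..N}. \<bar>Bi i\<bar>)" .
  qed
qed

lemma ess_sup_facts:
  fixes g :: "real \<Rightarrow> real"
  assumes T: "T > 0" and ne: "\<exists>c. AE t in lebesgue. t \<in> {0..T} \<longrightarrow> g t \<le> c"
    and nonneg: "\<And>t. 0 \<le> g t" and Dpos: "D > 0"
  shows "0 \<le> ess_sup_on T g"
    and "ess_sup_on T g \<le> D \<Longrightarrow> AE t in lebesgue. t \<in> {0..T} \<longrightarrow> g t \<le> 2 * D"
proof -
  define S where "S = {c. AE t in lebesgue. t \<in> {0..T} \<longrightarrow> g t \<le> c}"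
  have neS: "S \<noteq> {}" using ne by (auto simp: S_def)
  have lb: "0 \<le> c" if "c \<in> S" for c
  proof (rule ccontr)
    assume "\<not> 0 \<le> c"
    then have "\<And>t. \<not> g t \<le> c" using nonneg by (meson le_less_trans not_le)
    then have "AE t in lebesgue. t \<notin> {0..T}" using that by (auto simp: S_def)
    then have "{0..T} \<in> null_sets lebesgue" by (subst AE_iff_null_sets) auto
    then have "negligible (cbox 0 T)" by (simp add: negligible_iff_null_sets)
    then have "box 0 T = {}" by (simp only: negligible_interval)
    moreover have "T/2 \<in> box 0 T" using T by simp
    ultimately show False by blast
  qed
  have es: "ess_sup_on T g = Inf S" by (simp add: ess_sup_on_def S_def)
  show "0 \<le> ess_sup_on T g" unfolding es using neS lb by (intro cInf_greatest) auto
  assume le: "ess_sup_on T g \<le> D"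
  have "Inf S < D + D" using le Dpos es by simp
  from cInf_lessD[OF neS this] obtain c where c: "c \<in> S" "c < 2 * D" by auto
  then show "AE t in lebesgue. t \<in> {0..T} \<longrightarrow> g t \<le> 2 * D"
    unfolding S_def by (auto elim!: eventually_mono)
qed

lemma L2_diff:
  fixes a b :: "real \<Rightarrow> real^'n"
  assumes a: "L2_on T a" and b: "L2_on T b"
  shows "(\<lambda>t. (norm (a t - b t))\<^sup>2) integrable_on {0..T}"
proof (rule measurable_bounded_by_integrable_imp_integrable)
  have "(\<lambda>t. a t - b t) measurable_on {0..T}"
    using a b by (intro measurable_on_diff) (auto simp: L2_on_def)
  then have dm: "(\<lambda>t. a t - b t) \<in> borel_measurable (lebesgue_on {0..T})"
    using measurable_on_iff_borel_measurable[of "{0..T}" "\<lambda>t. a t - b t"] by simp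
  show "(\<lambda>t. (norm (a t - b t))\<^sup>2) \<in> borel_measurable (lebesgue_on {0..T})"
    by (intro borel_measurable_power measurable_compose[OF dm borel_measurable_norm])
  show "(\<lambda>t. 2 * (norm (a t))\<^sup>2 + 2 * (norm (b t))\<^sup>2) integrable_on {0..T}"
    using a b by (intro integrable_add integrable_cmul) (auto simp: L2_on_def)
  show "{0..T} \<in> sets lebesgue" by simp
  fix t
  have "norm (a t - b t) \<le> norm (a t) + norm (b t)" by (rule norm_triangle_ineq4)
  then have "(norm (a t - b t))\<^sup>2 \<le> (norm (a t) + norm (b t))\<^sup>2"
    by (intro power_mono) auto
  also have "\<dots> \<le> 2 * (norm (a t))\<^sup>2 + 2 * (norm (b t))\<^sup>2"
  proof -
    have "0 \<le> (norm (a t) - norm (b t))\<^sup>2" by simp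
    then show ?thesis unfolding power2_sum power2_diff by linarith
  qed
  finally show "norm ((norm (a t - b t))\<^sup>2) \<le> 2 * (norm (a t))\<^sup>2 + 2 * (norm (b t))\<^sup>2" by simp
qed
theorem mainTheorem19:
  fixes T :: real and p :: nat
    and M :: "real^'ny \<Rightarrow> real^'ny \<Rightarrow> real"
    and b :: "real^'ny \<Rightarrow> real^'ny \<Rightarrow> real^'nb"
    and f1 :: "real^'ny \<Rightarrow> real^'nu \<Rightarrow> real \<Rightarrow> real^'ny"
    and f2 :: "real^'ny \<Rightarrow> real^'nu \<Rightarrow> real \<Rightarrow> real^'nc"
    and yL yR :: "real^'ny" and uL uR :: "real^'nu"
    and ys :: "real \<Rightarrow> real^'ny" and us :: "real \<Rightarrow> real^'nu"
    and samp :: "(nat \<Rightarrow> real) \<Rightarrow> nat \<Rightarrow> real set"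
    and mesh :: "real \<Rightarrow> nat \<Rightarrow> real" and Nm :: "real \<Rightarrow> nat"
    and yh :: "real \<Rightarrow> real \<Rightarrow> real^'ny" and uh :: "real \<Rightarrow> real \<Rightarrow> real^'nu"
    and h0 eta Ceta lam Clam eps :: real
  assumes T_pos: "T > 0" and p_pos: "p \<ge> 1"
    and yLR: "\<forall>i. yL $ i \<le> yR $ i" and uLR: "\<forall>j. uL $ j \<le> uR $ j"
    and minim: "local_minimizer T M b f1 f2 yL yR uL uR ys us"
    \<comment> \<open>Approximability, with (yh h, uh h) the fixed approximating pair for mesh width h\<close>
    and h0_pos: "h0 > 0" and eta_pos: "eta > 0" and Ceta_pos: "Ceta > 0"
    and mesh_ok: "\<forall>h. 0 < h \<and> h \<le> h0 \<longrightarrow> is_mesh T (mesh h) (Nm h) \<and> mesh_width (mesh h) (Nm h) = h"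
    and approx_B: "\<forall>h. 0 < h \<and> h \<le> h0 \<longrightarrow> in_Bhp T samp (mesh h) (Nm h) p yL yR uL uR (yh h) (uh h)"
    and approx_dist: "\<forall>h. 0 < h \<and> h \<le> h0 \<longrightarrow> X_close T ys us (yh h) (uh h) (Ceta * h powr eta)"
    \<comment> \<open>(A.3)\<close>
    and lam_range: "0 < lam \<and> lam \<le> 1" and Clam_pos: "Clam > 0" and eps_pos: "eps > 0"
    and M_holder: "\<forall>v0 vT. norm (ys 0 - v0, ys T - vT) \<le> eps \<longrightarrow>
        \<bar>M (ys 0) (ys T) - M v0 vT\<bar> \<le> Clam * norm (ys 0 - v0, ys T - vT) powr lam"
    and b_holder: "\<forall>v0 vT. norm (ys 0 - v0, ys T - vT) \<le> eps \<longrightarrow>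
        norm (b (ys 0) (ys T) - b v0 vT) \<le> Clam * norm (ys 0 - v0, ys T - vT) powr lam"
    and f_holder: "\<forall>t\<in>{0..T}. \<forall>v w. norm (ys t - v, us t - w) \<le> eps \<longrightarrow>
        norm (f1 (ys t) (us t) t - f1 v w t, f2 (ys t) (us t) t - f2 v w t)
          \<le> Clam * norm (ys t - v, us t - w) powr lam"
  shows "\<exists>C>0. \<exists>h1>0. \<forall>h. 0 < h \<and> h \<le> h1 \<longrightarrow>
     (\<forall>yd. weak_deriv_on T (yh h) yd \<longrightarrow>
        (\<integral>\<^sup>+ t\<in>{0..T}. ennreal ((norm (f1 (yh h t) (uh h t) t - yd t, f2 (yh h t) (uh h t) t))\<^sup>2) \<partial>lebesgue)
          \<le> ennreal (C * h powr (2 * lam * eta)))"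
  proof -
  define K where "K = sqrt (real DIM((real^'ny) \<times> (real^'nu)))"
  have c1: "0 < real CARD('ny)" by simp
  have c2: "0 \<le> real CARD('nu)" by simp
  have "0 < real CARD('ny) + real CARD('nu)" using c1 c2 by linarith
  then have Kpos: "K > 0" unfolding K_def by simp
  define h1 where "h1 = min (min h0 1) ((eps / (2 * K * Ceta)) powr (1/eta))"
  define Q where "Q = ((2 * K * Ceta) powr lam)\<^sup>2"
  define C where "C = 2 * Clam\<^sup>2 * Q * T + 2 * Ceta\<^sup>2"
  have Qnn: "Q \<ge> 0" unfolding Q_def by simp
  have Cpos: "C > 0" unfolding C_def using Qnn T_pos Ceta_pos by (simp add: add_nonneg_pos)
  have epsK: "eps / (2 * K * Ceta) > 0" using eps_pos Kpos Ceta_pos by simp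
  have h1pos: "h1 > 0" unfolding h1_def using h0_pos epsK eps_pos Kpos Ceta_pos by simp
  have feas: "feasible T b f1 f2 yL yR uL uR ys us"
    using minim by (simp add: local_minimizer_def)
  then obtain yd0 where yd0w: "weak_deriv_on T ys yd0"
      and yd0e: "AE t in lebesgue. t \<in> {0..T} \<longrightarrow> yd0 t = f1 (ys t) (us t) t"
    unfolding feasible_def by blast
  have f2z: "AE t in lebesgue. t \<in> {0..T} \<longrightarrow> f2 (ys t) (us t) t = 0"
    using feas unfolding feasible_def by blast
  have inX: "in_X T ys us" using feas unfolding feasible_def by blast
  then obtain Bys Bus where Bys: "AE t in lebesgue. t \<in> {0..T} \<longrightarrow> norm (ys t) \<le> Bys"
      and Bus: "AE t in lebesgue. t \<in> {0..T} \<longrightarrow> norm (us t) \<le> Bus"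
    unfolding in_X_def ess_bounded_on_def by blast
  have notT: "AE t in lebesgue. t \<notin> {T}"
  proof -
    have "{T} \<in> null_sets lebesgue" using negligible_sing[of T] by (simp add: negligible_iff_null_sets)
    then show ?thesis by (subst AE_iff_null_sets[symmetric]) auto
  qed
  show ?thesis
  proof (rule exI[of _ C], intro conjI Cpos, rule exI[of _ h1], intro conjI h1pos allI impI)
    fix h :: real and yd assume h: "0 < h \<and> h \<le> h1" and wd: "weak_deriv_on T (yh h) yd"
    have hpos: "0 < h" and hh0: "h \<le> h0" and h1': "h \<le> 1"
      and hs: "h \<le> (eps / (2 * K * Ceta)) powr (1/eta)"
      using h unfolding h1_def by auto
    have "h powr eta \<le> ((eps / (2 * K * Ceta)) powr (1/eta)) powr eta"
      using hs hpos eta_pos by (intro powr_mono2) auto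
    also have "\<dots> = eps / (2 * K * Ceta)" using eta_pos epsK eps_pos Kpos Ceta_pos by (simp add: powr_powr)
    finally have hsmall: "h powr eta \<le> eps / (2 * K * Ceta)" .
    define D where "D = Ceta * h powr eta"
    have Dpos: "D > 0" unfolding D_def using Ceta_pos hpos by simp
    have KD: "2 * K * D \<le> eps"
    proof -
      have "2 * K * Ceta > 0" using Kpos Ceta_pos by simp
      then have "h powr eta * (2 * K * Ceta) \<le> eps" using hsmall by (simp add: pos_le_divide_eq)
      then show ?thesis unfolding D_def by (simp add: algebra_simps)
    qed
    from approx_dist hpos hh0 obtain yds ydh where
      ydsw: "weak_deriv_on T ys yds" and ydhw: "weak_deriv_on T (yh h) ydh"
      and ydsL: "L2_on T yds" and ydhL: "L2_on T ydh"
      and Xn: "X_norm T (\<lambda>t. yds t - ydh t) (\<lambda>t. ys t - yh h t) (\<lambda>t. us t - uh h t) \<le> D"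
      unfolding X_close_def D_def by blast
    have inB: "in_Bhp T samp (mesh h) (Nm h) p yL yR uL uR (yh h) (uh h)" using approx_B hpos hh0 by blast
    then have inXh: "in_Xhp T (mesh h) (Nm h) p (yh h) (uh h)" by (simp add: in_Bhp_def)
    have ism: "is_mesh T (mesh h) (Nm h)" using mesh_ok hpos hh0 by blast
    obtain Buh where Buh: "\<forall>t\<in>{0..<T}. norm (uh h t) \<le> Buh" using u_bounded[OF ism inXh] by blast
    have "continuous_on {0..T} (yh h)" using inXh by (simp add: in_Xhp_def)
    then have "bounded (yh h ` {0..T})" by (intro compact_imp_bounded compact_continuous_image) auto
    then obtain Byh where Byh: "\<forall>t\<in>{0..T}. norm (yh h t) \<le> Byh" unfolding bounded_iff by blast
    define g where "g = (\<lambda>t. infnorm (ys t - yh h t, us t - uh h t))"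
    have gnn: "\<And>t. 0 \<le> g t" unfolding g_def by (simp add: infnorm_pos_le)
    have ne: "\<exists>c. AE t in lebesgue. t \<in> {0..T} \<longrightarrow> g t \<le> c"
    proof (intro exI[of _ "Bys + Byh + Bus + Buh"])
      show "AE t in lebesgue. t \<in> {0..T} \<longrightarrow> g t \<le> Bys + Byh + Bus + Buh"
        using Bys Bus notT
      proof eventually_elim
        case (elim t)
        show ?case
        proof
          assume t: "t \<in> {0..T}"
          then have t': "t \<in> {0..<T}" using elim by auto
          have "g t \<le> norm (ys t - yh h t, us t - uh h t)" unfolding g_def by (rule infnorm_le_norm)
          also have "\<dots> \<le> norm (ys t - yh h t) + norm (us t - uh h t)" by (rule norm_Pair_le)
          also have "\<dots> \<le> (norm (ys t) + norm (yh h t)) + (norm (us t) + norm (uh h t))"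
            by (intro add_mono norm_triangle_ineq4)
          also have "\<dots> \<le> Bys + Byh + Bus + Buh" using elim t t' Byh Buh by fastforce
          finally show "g t \<le> Bys + Byh + Bus + Buh" .
        qed
      qed
    qed
    have Xn': "L2_norm_on T (\<lambda>t. yds t - ydh t) + ess_sup_on T g \<le> D"
      using Xn unfolding X_norm_def g_def by simp
    have es0: "0 \<le> ess_sup_on T g" by (rule ess_sup_facts(1)[OF T_pos ne gnn Dpos])
    define int where "int = integral {0..T} (\<lambda>t. (norm (yds t - ydh t))\<^sup>2)"
    have dint: "(\<lambda>t. (norm (yds t - ydh t))\<^sup>2) integrable_on {0..T}" by (rule L2_diff[OF ydsL ydhL])
    have intnn: "0 \<le> int" unfolding int_def using dint by (intro integral_nonneg) auto
    have L2nn: "0 \<le> L2_norm_on T (\<lambda>t. yds t - ydh t)" using intnn unfolding L2_norm_on_def int_def by simp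
    have gae: "AE t in lebesgue. t \<in> {0..T} \<longrightarrow> g t \<le> 2 * D"
      using Xn' L2nn by (intro ess_sup_facts(2)[OF T_pos ne gnn Dpos]) simp
    have "sqrt int \<le> D" using Xn' es0 unfolding L2_norm_on_def int_def by simp
    then have "(sqrt int)\<^sup>2 \<le> D\<^sup>2" using intnn by (intro power_mono) auto
    then have intD: "int \<le> D\<^sup>2" using intnn by simp
    have u1: "AE t in lebesgue. t \<in> {0..T} \<longrightarrow> yd t = ydh t" by (rule weak_deriv_unique[OF wd ydhw])
    have u2: "AE t in lebesgue. t \<in> {0..T} \<longrightarrow> yd0 t = yds t" by (rule weak_deriv_unique[OF yd0w ydsw])
    define E where "E = Clam * (2 * K * D) powr lam"
    have Enn: "0 \<le> E" unfolding E_def using Clam_pos by simp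
    define A where "A = 2 * E\<^sup>2"
    have ae: "AE t in lebesgue. t \<in> {0..T} \<longrightarrow>
        (norm (f1 (yh h t) (uh h t) t - yd t, f2 (yh h t) (uh h t) t))\<^sup>2 \<le> A + 2 * (norm (yds t - ydh t))\<^sup>2"
      using u1 u2 yd0e f2z gae
    proof eventually_elim
      case (elim t)
      show ?case
      proof
        assume t: "t \<in> {0..T}"
        have gt: "infnorm (ys t - yh h t, us t - uh h t) \<le> 2 * D" using elim t unfolding g_def by simp
        have "norm (ys t - yh h t, us t - uh h t) \<le> K * infnorm (ys t - yh h t, us t - uh h t)"
          unfolding K_def by (rule norm_le_infnorm)
        also have "\<dots> \<le> K * (2 * D)" using gt Kpos by (intro mult_left_mono) auto
        finally have dl: "norm (ys t - yh h t, us t - uh h t) \<le> 2 * K * D" by simp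
        then have de: "norm (ys t - yh h t, us t - uh h t) \<le> eps" using KD by simp
        have "norm (f1 (ys t) (us t) t - f1 (yh h t) (uh h t) t, f2 (ys t) (us t) t - f2 (yh h t) (uh h t) t)
              \<le> Clam * norm (ys t - yh h t, us t - uh h t) powr lam"
          using f_holder t de by blast
        also have "\<dots> \<le> E" unfolding E_def using dl lam_range Clam_pos
          by (intro mult_left_mono powr_mono2) auto
        finally have hol: "norm (f1 (ys t) (us t) t - f1 (yh h t) (uh h t) t, f2 (ys t) (us t) t - f2 (yh h t) (uh h t) t) \<le> E" .
        have vec: "(f1 (yh h t) (uh h t) t - yd t, f2 (yh h t) (uh h t) t)
          = (yds t - ydh t, 0) - (f1 (ys t) (us t) t - f1 (yh h t) (uh h t) t, f2 (ys t) (us t) t - f2 (yh h t) (uh h t) t)"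
          using elim t by simp
        have "norm (f1 (yh h t) (uh h t) t - yd t, f2 (yh h t) (uh h t) t)
            \<le> norm (yds t - ydh t, 0::real^'nc) + norm (f1 (ys t) (us t) t - f1 (yh h t) (uh h t) t, f2 (ys t) (us t) t - f2 (yh h t) (uh h t) t)"
          unfolding vec by (rule norm_triangle_ineq4)
        also have "\<dots> \<le> norm (yds t - ydh t) + E" using hol by (simp add: norm_Pair)
        finally have nb: "norm (f1 (yh h t) (uh h t) t - yd t, f2 (yh h t) (uh h t) t) \<le> norm (yds t - ydh t) + E" .
        have "(norm (f1 (yh h t) (uh h t) t - yd t, f2 (yh h t) (uh h t) t))\<^sup>2 \<le> (norm (yds t - ydh t) + E)\<^sup>2"
          using nb by (intro power_mono) auto
        also have "\<dots> \<le> A + 2 * (norm (yds t - ydh t))\<^sup>2"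
        proof -
          have "0 \<le> (norm (yds t - ydh t) - E)\<^sup>2" by simp
          then show ?thesis unfolding A_def power2_sum power2_diff by linarith
        qed
        finally show "(norm (f1 (yh h t) (uh h t) t - yd t, f2 (yh h t) (uh h t) t))\<^sup>2 \<le> A + 2 * (norm (yds t - ydh t))\<^sup>2" .
      qed
    qed
    define H where "H = (\<lambda>t. A + 2 * (norm (yds t - ydh t))\<^sup>2)"
    have Hi: "H integrable_on {0..T}" unfolding H_def using dint by (intro integrable_add integrable_cmul) auto
    have Hnn: "\<And>t. 0 \<le> H t" unfolding H_def A_def by simp
    have intH: "integral {0..T} H = A * T + 2 * int"
      unfolding H_def int_def using dint T_pos by (subst integral_add) auto
    have Hs: "set_integrable lebesgue {0..T} H" using nonnegative_absolutely_integrable_1[OF Hi] Hnn by simp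
    have nnH: "(\<integral>\<^sup>+ t\<in>{0..T}. ennreal (H t) \<partial>lebesgue) = ennreal (integral {0..T} H)"
    proof -
      have "(\<integral>\<^sup>+ t\<in>{0..T}. ennreal (H t) \<partial>lebesgue) = (\<integral>\<^sup>+ t. ennreal (indicator {0..T} t *\<^sub>R H t) \<partial>lebesgue)"
        by (intro nn_integral_cong) (auto simp: indicator_def)
      also have "\<dots> = ennreal (LINT t|lebesgue. indicator {0..T} t *\<^sub>R H t)"
        using Hs Hnn unfolding set_integrable_def by (intro nn_integral_eq_integral) (auto simp: indicator_def)
      also have "(LINT t|lebesgue. indicator {0..T} t *\<^sub>R H t) = integral {0..T} H"
        using set_lebesgue_integral_eq_integral(2)[OF Hs] by (simp add: set_lebesgue_integral_def)
      finally show ?thesis .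
    qed
    have "(\<integral>\<^sup>+ t\<in>{0..T}. ennreal ((norm (f1 (yh h t) (uh h t) t - yd t, f2 (yh h t) (uh h t) t))\<^sup>2) \<partial>lebesgue)
        \<le> (\<integral>\<^sup>+ t\<in>{0..T}. ennreal (H t) \<partial>lebesgue)"
      using ae by (intro nn_integral_mono_AE) (auto elim!: eventually_mono simp: H_def indicator_def intro!: ennreal_leI)
    also have "\<dots> = ennreal (A * T + 2 * int)" using nnH intH by simp
    also have "\<dots> \<le> ennreal (C * h powr (2 * lam * eta))"
    proof (rule ennreal_leI)
      have p1: "(2 * K * D) powr lam = (2 * K * Ceta) powr lam * h powr (eta * lam)"
        unfolding D_def using Kpos Ceta_pos hpos
        by (simp add: powr_mult powr_powr mult.assoc)
      have sq: "(h powr (eta * lam))\<^sup>2 = h powr (2 * lam * eta)"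
        by (simp add: power2_eq_square powr_add[symmetric] algebra_simps)
      have AT: "A * T = 2 * Clam\<^sup>2 * Q * T * h powr (2 * lam * eta)"
        unfolding A_def E_def p1 Q_def using sq by (simp add: power_mult_distrib algebra_simps)
      have "D\<^sup>2 = Ceta\<^sup>2 * h powr (2 * eta)"
        unfolding D_def by (simp add: power_mult_distrib power2_eq_square powr_add[symmetric])
      also have "\<dots> \<le> Ceta\<^sup>2 * h powr (2 * lam * eta)"
        using lam_range eta_pos hpos h1' by (intro mult_left_mono powr_mono') auto
      finally have D2: "D\<^sup>2 \<le> Ceta\<^sup>2 * h powr (2 * lam * eta)" .
      have "A * T + 2 * int \<le> A * T + 2 * D\<^sup>2" using intD by simp
      also have "\<dots> \<le> C * h powr (2 * lam * eta)"
      proof -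
        have "C * h powr (2 * lam * eta) = 2 * Clam\<^sup>2 * Q * T * h powr (2 * lam * eta) + 2 * (Ceta\<^sup>2 * h powr (2 * lam * eta))"
          unfolding C_def by (simp add: algebra_simps)
        then show ?thesis using AT D2 by linarith
      qed
      finally show "A * T + 2 * int \<le> C * h powr (2 * lam * eta)" .
    qed
    finally show "(\<integral>\<^sup>+ t\<in>{0..T}. ennreal ((norm (f1 (yh h t) (uh h t) t - yd t, f2 (yh h t) (uh h t) t))\<^sup>2) \<partial>lebesgue)
        \<le> ennreal (C * h powr (2 * lam * eta))" .
  qed
qed

end
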